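(* Let $d\ge 2$, let $\varphi=\sum_{\bm{k}\in\mathbb{Z}^d}\varphi_{\bm{k}}z^{\bm{k}}\in L^\infty(\mathbb{T}^d)$, and let $C$ be a conjugation on $H^2(\mathbb{D}^d)$ with canonical factorization $C=UJ_{H^2(\mathbb{D}^d)}$ ($U$ unitary). For $\bm{k}\in\mathbb{Z}_+^d$ put $\tilde z^{\bm{k}}:=Cz^{\bm{k}}=Uz^{\bm{k}}$. The following are equivalent: (1) $T_\varphi$ is $C$-symmetric; (2) $\varphi_{\bm{k}-\bm{l}}=\langle T_\varphi\tilde z^{\bm{k}},\tilde z^{\bm{l}}\rangle$ for all $\bm{k},\bm{l}\in\mathbb{Z}_+^d$; (3) $\varphi_{\bm{k}-\bm{l}}=\langle U^*T_\varphi Uz^{\bm{k}},z^{\bm{l}}\rangle$ for all $\bm{k},\bm{l}\in\mathbb{Z}_+^d$.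
   Context: A conjugation is an anti-linear, involutive ($C^2=I$), isometric map on a Hilbert space; $T$ is $C$-symmetric if $CT^*C=T$. $H^2(\mathbb{D}^d)$ is the Hardy space over the unit polydisc $\mathbb{D}^d$, identified with the closed subspace of $L^2(\mathbb{T}^d)$ spanned by the monomials $z^{\bm{k}}=z_1^{k_1}\cdots z_d^{k_d}$, $\bm{k}\in\mathbb{Z}_+^d$, which form its canonical orthonormal basis; inner products are linear in the first entry. For $\varphi\in L^\infty(\mathbb{T}^d)$, $T_\varphi f=P_{H^2(\mathbb{D}^d)}(\varphi f)$. The canonical conjugation is $J_{H^2(\mathbb{D}^d)}(\sum_{\bm{k}}a_{\bm{k}}z^{\bm{k}})=\sum_{\bm{k}}\bar a_{\bm{k}}z^{\bm{k}}$, and the canonical factorization of a conjugation $C$ is the unique factorization $C=UJ_{H^2(\mathbb{D}^d)}$ with $U$ unitary. (In the paper, condition (2) is written as $\varphi_{\bm{k}-\bm{l}}=\tilde\varphi_{\bm{l}-\bm{k}}$ with the notation $\tilde\varphi_{\bm{l}-\bm{k}}:=\langle T_\varphi\tilde z^{\bm{k}},\tilde z^{\bm{l}}\rangle$.) *)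

theory Defs
  imports "HOL-Analysis.Analysis"
begin

text \<open>The torus T^d is parametrised by angles theta in [0, 2pi]^d (normalised Lebesgue
measure). Multi-indices in Z^d are functions 'd => int, those in Z_+^d are 'd => nat.\<close>

definition torus_box :: "(real^'d) set" where
  "torus_box = cbox 0 (\<chi> i. 2 * pi)"

definition monom_T :: "('d::finite \<Rightarrow> int) \<Rightarrow> real^'d \<Rightarrow> complex" where
  "monom_T k \<theta> = exp (\<i> * of_real (\<Sum>i\<in>UNIV. of_int (k i) * \<theta> $ i))"

definition L2_inner :: "(real^'d::finite \<Rightarrow> complex) \<Rightarrow> (real^'d \<Rightarrow> complex) \<Rightarrow> complex" where
  "L2_inner f g = (1 / (2 * pi) ^ CARD('d)) *\<^sub>R (LINT \<theta>:torus_box|lborel. f \<theta> * cnj (g \<theta>))"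

definition fourier_coeff :: "(real^'d::finite \<Rightarrow> complex) \<Rightarrow> ('d \<Rightarrow> int) \<Rightarrow> complex" where
  "fourier_coeff \<phi> k = L2_inner \<phi> (monom_T k)"

definition Linfty_T :: "(real^'d::finite \<Rightarrow> complex) \<Rightarrow> bool" where
  "Linfty_T \<phi> \<longleftrightarrow> \<phi> \<in> borel_measurable lborel \<and>
     (\<exists>B. AE \<theta> in lborel. \<theta> \<in> torus_box \<longrightarrow> cmod (\<phi> \<theta>) \<le> B)"

text \<open>H^2(D^d), identified (through its canonical orthonormal basis z^k, k in Z_+^d) with
  the square-summable coefficient families a = (a_k).\<close>
definition H2 :: "(('d::finite \<Rightarrow> nat) \<Rightarrow> complex) set" where
  "H2 = {a. (\<lambda>k. (cmod (a k))\<^sup>2) summable_on UNIV}"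

definition H2_inner :: "(('d::finite \<Rightarrow> nat) \<Rightarrow> complex) \<Rightarrow> (('d \<Rightarrow> nat) \<Rightarrow> complex) \<Rightarrow> complex" where
  "H2_inner a b = (\<Sum>\<^sub>\<infinity>k. a k * cnj (b k))"

definition H2_norm :: "(('d::finite \<Rightarrow> nat) \<Rightarrow> complex) \<Rightarrow> real" where
  "H2_norm a = sqrt (\<Sum>\<^sub>\<infinity>k. (cmod (a k))\<^sup>2)"

definition H2_monom :: "('d::finite \<Rightarrow> nat) \<Rightarrow> (('d \<Rightarrow> nat) \<Rightarrow> complex)" where
  "H2_monom k = (\<lambda>j. if j = k then 1 else 0)"

definition J_H2 :: "(('d::finite \<Rightarrow> nat) \<Rightarrow> complex) \<Rightarrow> (('d \<Rightarrow> nat) \<Rightarrow> complex)" where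
  "J_H2 a = (\<lambda>k. cnj (a k))"

text \<open>Toeplitz operator T_phi f = P(phi f), in coordinates:
  (T_phi f)_l = <phi f, z^l> = sum_k a_k <phi z^k, z^l>.\<close>
definition toeplitz :: "(real^'d::finite \<Rightarrow> complex) \<Rightarrow> (('d \<Rightarrow> nat) \<Rightarrow> complex) \<Rightarrow> (('d \<Rightarrow> nat) \<Rightarrow> complex)" where
  "toeplitz \<phi> a = (\<lambda>l. \<Sum>\<^sub>\<infinity>k. a k *
      L2_inner (\<lambda>\<theta>. \<phi> \<theta> * monom_T (\<lambda>i. int (k i)) \<theta>) (monom_T (\<lambda>i. int (l i))))"

definition H2_adj :: "((('d::finite \<Rightarrow> nat) \<Rightarrow> complex) \<Rightarrow> (('d \<Rightarrow> nat) \<Rightarrow> complex))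
    \<Rightarrow> (('d \<Rightarrow> nat) \<Rightarrow> complex) \<Rightarrow> (('d \<Rightarrow> nat) \<Rightarrow> complex)" where
  "H2_adj T y = (THE z. z \<in> H2 \<and> (\<forall>x\<in>H2. H2_inner (T x) y = H2_inner x z))"

definition is_conjugation :: "((('d::finite \<Rightarrow> nat) \<Rightarrow> complex) \<Rightarrow> (('d \<Rightarrow> nat) \<Rightarrow> complex)) \<Rightarrow> bool" where
  "is_conjugation C \<longleftrightarrow>
     (\<forall>a\<in>H2. C a \<in> H2) \<and>
     (\<forall>a\<in>H2. \<forall>b\<in>H2. C (\<lambda>k. a k + b k) = (\<lambda>k. C a k + C b k)) \<and>
     (\<forall>a\<in>H2. \<forall>c. C (\<lambda>k. c * a k) = (\<lambda>k. cnj c * C a k)) \<and>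
     (\<forall>a\<in>H2. C (C a) = a) \<and>
     (\<forall>a\<in>H2. H2_norm (C a) = H2_norm a)"

definition C_symmetric :: "((('d::finite \<Rightarrow> nat) \<Rightarrow> complex) \<Rightarrow> (('d \<Rightarrow> nat) \<Rightarrow> complex))
    \<Rightarrow> ((('d \<Rightarrow> nat) \<Rightarrow> complex) \<Rightarrow> (('d \<Rightarrow> nat) \<Rightarrow> complex)) \<Rightarrow> bool" where
  "C_symmetric C T \<longleftrightarrow> (\<forall>a\<in>H2. C (H2_adj T (C a)) = T a)"

text \<open>Unitary factor of the canonical factorization C = U J, i.e. U = C J (as J^2 = I).\<close>
definition canon_unitary :: "((('d::finite \<Rightarrow> nat) \<Rightarrow> complex) \<Rightarrow> (('d \<Rightarrow> nat) \<Rightarrow> complex))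
    \<Rightarrow> (('d \<Rightarrow> nat) \<Rightarrow> complex) \<Rightarrow> (('d \<Rightarrow> nat) \<Rightarrow> complex)" where
  "canon_unitary C = (\<lambda>a. C (J_H2 a))"

end

theory Submission
  imports Defs
begin


lemma prod_Basis_cart:
  "(\<Prod>b\<in>(Basis::(real^'d) set). h b) = (\<Prod>i\<in>UNIV. h (axis i 1))"
proof -
  have B: "(Basis::(real^'d) set) = range (\<lambda>i. axis i 1)"
    by (auto simp: Basis_vec_def)
  have "inj (\<lambda>i::'d. axis i (1::real))"
    by (auto simp: inj_on_def axis_eq_axis)
  then show ?thesis unfolding B by (simp add: prod.reindex)
qed

lemma test:
  fixes m :: "'d::finite \<Rightarrow> int"
  defines "g \<equiv> \<lambda>(b::real^'d) t. indicator {0..2*pi} t *\<^sub>R exp (\<i> * of_real (of_int (m (SOME i. b = axis i 1)) * t))"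
  shows "indicator torus_box \<theta> *\<^sub>R monom_T m \<theta> = (\<Prod>b\<in>Basis. g b (\<theta> \<bullet> b))"
proof -
  have "(\<Prod>b\<in>Basis. g b (\<theta> \<bullet> b)) = (\<Prod>i\<in>UNIV. indicator {0..2*pi} (\<theta>$i) *\<^sub>R exp (\<i> * of_real (of_int (m i) * \<theta>$i)))"
    unfolding prod_Basis_cart g_def by (simp add: inner_axis axis_eq_axis)
  also have "\<dots> = (\<Prod>i\<in>UNIV. (indicator {0..2*pi} (\<theta>$i) :: complex)) * (\<Prod>i\<in>UNIV. exp (\<i> * of_real (of_int (m i) * \<theta>$i)))"
    by (simp add: scaleR_conv_of_real prod.distrib) (intro prod.cong refl, simp add: indicator_def of_bool_def)
  also have "(\<Prod>i\<in>UNIV. exp (\<i> * of_real (of_int (m i) * \<theta>$i))) = monom_T m \<theta>"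
    unfolding monom_T_def by (simp add: exp_sum[symmetric] sum_distrib_left)
  also have "(\<Prod>i\<in>UNIV. (indicator {0..2*pi} (\<theta>$i) :: complex)) = indicator torus_box \<theta>"
    by (auto simp: torus_box_def mem_box_cart indicator_def prod_zero_iff)
  finally show ?thesis by (simp add: scaleR_conv_of_real indicator_def)
qed

lemma integral_lborel_prod:
  fixes g :: "'a::euclidean_space \<Rightarrow> real \<Rightarrow> complex"
  assumes int: "\<And>b. b \<in> Basis \<Longrightarrow> integrable lborel (g b)"
  shows "(\<integral>x. (\<Prod>b\<in>Basis. g b (x \<bullet> b)) \<partial>(lborel::'a measure)) = (\<Prod>b\<in>Basis. \<integral>t. g b t \<partial>lborel)"
proof -
  interpret product_sigma_finite "\<lambda>_::'a. lborel::real measure"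
    by standard
  have meas[measurable]: "g b \<in> borel_measurable lborel" if "b \<in> Basis" for b
    using int[OF that] by auto
  have "(\<integral>x. (\<Prod>b\<in>Basis. g b (x \<bullet> b)) \<partial>(lborel::'a measure)) =
     (\<integral>f. (\<Prod>b\<in>Basis. g b ((\<Sum>b'\<in>Basis. f b' *\<^sub>R b') \<bullet> b)) \<partial>(\<Pi>\<^sub>M b\<in>Basis. lborel))"
    apply (subst lborel_eq)
    apply (subst integral_distr)
      apply measurable
    done
  also have "\<dots> = (\<integral>f. (\<Prod>b\<in>Basis. g b (f b)) \<partial>(\<Pi>\<^sub>M b\<in>Basis. lborel))"
    by (intro Bochner_Integration.integral_cong refl prod.cong)
       (simp add: inner_sum_left inner_Basis if_distrib cong: if_cong)
  also have "\<dots> = (\<Prod>b\<in>Basis. \<integral>t. g b t \<partial>lborel)"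
    by (rule product_integral_prod) (auto intro: int)
  finally show ?thesis .
qed

lemma int_1d:
  fixes n :: int
  shows "(\<integral>t. indicator {0..2*pi} t *\<^sub>R exp (\<i> * (of_int n * of_real t)) \<partial>lborel) = (if n = 0 then 2*pi else 0)"
proof (cases "n = 0")
  case True
  then show ?thesis by (simp add: scaleR_conv_of_real)
next
  case False
  define G where "G z = exp (\<i> * (of_int n * z)) / (\<i> * of_int n)" for z :: complex
  have "(LBINT t=ereal 0..ereal (2*pi). exp (\<i> * (of_int n * of_real t))) = G (of_real (2*pi)) - G (of_real 0)"
  proof (rule interval_integral_FTC_finite[where F="\<lambda>t. G (of_real t)"])
    show "continuous_on {min 0 (2 * pi)..max 0 (2 * pi)} (\<lambda>t. exp (\<i> * (of_int n * complex_of_real t)))"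
      by (intro continuous_intros)
    fix x :: real
    have "(G has_field_derivative exp (\<i> * (of_int n * complex_of_real x))) (at (of_real x))"
      unfolding G_def using False
      by (auto intro!: derivative_eq_intros simp: field_simps)
    then show "((\<lambda>t. G (of_real t)) has_vector_derivative exp (\<i> * (of_int n * complex_of_real x))) (at x within {min 0 (2 * pi)..max 0 (2 * pi)})"
      by (rule has_vector_derivative_real_field)
  qed
  also have "G (of_real (2*pi)) = G (of_real 0)"
  proof -
    have "exp (\<i> * (of_int n * of_real (2*pi))) = 1"
      using exp_integer_2pi[of "of_int n"] by (simp add: mult_ac)
    then show ?thesis by (simp add: G_def)
  qed
  finally have "(LBINT t=ereal 0..ereal (2*pi). exp (\<i> * (of_int n * of_real t))) = 0" by simp
  then show ?thesis using False
    by (simp add: interval_integral_Icc set_lebesgue_integral_def)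
qed

lemma ortho:
  fixes m :: "'d::finite \<Rightarrow> int"
  shows "(LINT \<theta>:torus_box|lborel. monom_T m \<theta>) = (if m = (\<lambda>_. 0) then complex_of_real ((2*pi)^CARD('d)) else 0)"
proof -
  define g where "g \<equiv> \<lambda>(b::real^'d) t. indicator {0..2*pi} t *\<^sub>R exp (\<i> * of_real (of_int (m (SOME i. b = axis i 1)) * t))"
  have "(LINT \<theta>:torus_box|lborel. monom_T m \<theta>) = (\<integral>\<theta>. (\<Prod>b\<in>Basis. g b (\<theta> \<bullet> b)) \<partial>lborel)"
    unfolding set_lebesgue_integral_def g_def by (simp only: test)
  also have "\<dots> = (\<Prod>b\<in>Basis. \<integral>t. g b t \<partial>lborel)"
  proof (rule integral_lborel_prod)
    fix b :: "real^'d"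
    show "integrable lborel (g b)"
      unfolding g_def
      by (rule integrableI_bounded_set[where A="{0..2*pi}" and B=1]) (auto simp: indicator_def)
  qed
  also have "\<dots> = (\<Prod>i\<in>UNIV. (if m i = 0 then complex_of_real (2*pi) else 0))"
    unfolding prod_Basis_cart g_def by (simp add: axis_eq_axis int_1d if_distrib cong: if_cong)
  also have "\<dots> = (if m = (\<lambda>_. 0) then complex_of_real ((2*pi)^CARD('d)) else 0)"
    by (auto simp: prod_zero_iff fun_eq_iff)
  finally show ?thesis .
qed

definition ibox :: "(real^'d::finite \<Rightarrow> complex) \<Rightarrow> complex" where
  "ibox h = (\<integral>\<theta>. indicator torus_box \<theta> *\<^sub>R h \<theta> \<partial>lborel)"

lemma L2_inner_ibox: "L2_inner f g = (1/(2*pi)^CARD('d)) *\<^sub>R ibox (\<lambda>\<theta>. f \<theta> * cnj (g \<theta>))"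
  for f g :: "real^'d::finite \<Rightarrow> complex"
  by (simp add: L2_inner_def ibox_def set_lebesgue_integral_def)

lemma torus_box_sets[measurable]: "torus_box \<in> sets borel"
  by (simp add: torus_box_def)

lemma torus_box_finite: "emeasure lborel (torus_box::(real^'d::finite) set) < \<infinity>"
  by (simp add: torus_box_def emeasure_lborel_cbox_eq)

lemma ibox_integrable:
  fixes h :: "real^'d::finite \<Rightarrow> complex"
  assumes "h \<in> borel_measurable lborel" "AE \<theta> in lborel. \<theta> \<in> torus_box \<longrightarrow> cmod (h \<theta>) \<le> K"
  shows "integrable lborel (\<lambda>\<theta>. indicator torus_box \<theta> *\<^sub>R h \<theta>)"
  by (rule integrableI_bounded_set[where A=torus_box and B=K])
     (use assms torus_box_finite in \<open>auto simp: indicator_def\<close>)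

lemma monom_T_cont: "continuous_on UNIV (monom_T m)"
  unfolding monom_T_def by (intro continuous_intros)

lemma monom_T_meas[measurable]: "monom_T m \<in> borel_measurable borel"
  by (rule borel_measurable_continuous_onI[OF monom_T_cont])

lemma cnj_meas[measurable]: "f \<in> borel_measurable M \<Longrightarrow> (\<lambda>x. cnj (f x)) \<in> borel_measurable M"
  for f :: "'a \<Rightarrow> complex"
  by (rule measurable_compose[OF _ borel_measurable_continuous_onI[OF continuous_on_cnj[OF continuous_on_id]]])

lemma monom_T_cnj_meas[measurable]: "(\<lambda>x. cnj (monom_T m x)) \<in> borel_measurable borel"
  by (rule borel_measurable_continuous_onI) (intro continuous_intros monom_T_cont)

lemma monom_T_norm[simp]: "cmod (monom_T m \<theta>) = 1"
  unfolding monom_T_def by (rule norm_exp_i_times)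

lemma monom_T_mult_cnj: "monom_T m \<theta> * cnj (monom_T m' \<theta>) = monom_T (\<lambda>i. m i - m' i) \<theta>"
  unfolding monom_T_def
  by (simp add: exp_cnj cnj_sum exp_add[symmetric] sum_subtractf algebra_simps flip: sum_distrib_left)

lemma ibox_monom: "ibox (monom_T m) = (if m = (\<lambda>_. 0) then complex_of_real ((2*pi)^CARD('d)) else 0)"
  for m :: "'d::finite \<Rightarrow> int"
  using ortho[of m] by (simp add: ibox_def set_lebesgue_integral_def)

lemma expand:
  fixes \<psi> :: "real^'d::finite \<Rightarrow> complex" and F G :: "('d \<Rightarrow> nat) set"
  assumes [measurable]: "\<psi> \<in> borel_measurable lborel" and bnd: "AE \<theta> in lborel. \<theta> \<in> torus_box \<longrightarrow> cmod (\<psi> \<theta>) \<le> K"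
    and F: "finite F" and G: "finite G"
  shows "ibox (\<lambda>\<theta>. \<psi> \<theta> * (\<Sum>k\<in>F. a k * monom_T (\<lambda>i. int (k i)) \<theta>) * cnj (\<Sum>l\<in>G. b l * monom_T (\<lambda>i. int (l i)) \<theta>))
    = (\<Sum>k\<in>F. \<Sum>l\<in>G. a k * cnj (b l) * ibox (\<lambda>\<theta>. \<psi> \<theta> * monom_T (\<lambda>i. int (k i)) \<theta> * cnj (monom_T (\<lambda>i. int (l i)) \<theta>)))"
proof -
  have int: "integrable lborel (\<lambda>\<theta>. indicator torus_box \<theta> *\<^sub>R (\<psi> \<theta> * monom_T (\<lambda>i. int (k i)) \<theta> * cnj (monom_T (\<lambda>i. int (l i)) \<theta>)))" for k l :: "'d \<Rightarrow> nat"
    apply (rule ibox_integrable[where K=K])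
     apply measurable
    using bnd by (auto simp: norm_mult)
  have "ibox (\<lambda>\<theta>. \<psi> \<theta> * (\<Sum>k\<in>F. a k * monom_T (\<lambda>i. int (k i)) \<theta>) * cnj (\<Sum>l\<in>G. b l * monom_T (\<lambda>i. int (l i)) \<theta>))
     = (\<integral>\<theta>. (\<Sum>k\<in>F. \<Sum>l\<in>G. a k * cnj (b l) * (indicator torus_box \<theta> *\<^sub>R (\<psi> \<theta> * monom_T (\<lambda>i. int (k i)) \<theta> * cnj (monom_T (\<lambda>i. int (l i)) \<theta>)))) \<partial>lborel)"
    unfolding ibox_def
    by (intro Bochner_Integration.integral_cong refl)
       (simp add: sum_distrib_left sum_distrib_right scaleR_sum_right mult_ac)
  also have "\<dots> = (\<Sum>k\<in>F. \<Sum>l\<in>G. a k * cnj (b l) * ibox (\<lambda>\<theta>. \<psi> \<theta> * monom_T (\<lambda>i. int (k i)) \<theta> * cnj (monom_T (\<lambda>i. int (l i)) \<theta>)))"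
    unfolding ibox_def
    apply (subst Bochner_Integration.integral_sum)
     apply (rule Bochner_Integration.integrable_sum, rule integrable_mult_right, rule int)
    apply (rule sum.cong[OF refl])
    apply (subst Bochner_Integration.integral_sum)
     apply (rule integrable_mult_right, rule int)
    apply (rule sum.cong[OF refl])
    apply (rule integral_mult_right_zero)
    done
  finally show ?thesis .
qed


definition tm :: "(real^'d::finite \<Rightarrow> complex) \<Rightarrow> ('d \<Rightarrow> nat) \<Rightarrow> ('d \<Rightarrow> nat) \<Rightarrow> complex" where
  "tm \<phi> k l = L2_inner (\<lambda>\<theta>. \<phi> \<theta> * monom_T (\<lambda>i. int (k i)) \<theta>) (monom_T (\<lambda>i. int (l i)))"

lemma trig_meas[measurable]:
  "(\<lambda>\<theta>. \<Sum>k\<in>F. a k * monom_T (\<lambda>i. int (k i)) \<theta>) \<in> borel_measurable borel"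
  by measurable

lemma trig_bound: "cmod (\<Sum>k\<in>F. a k * monom_T (\<lambda>i. int (k i)) \<theta>) \<le> (\<Sum>k\<in>F. cmod (a k))"
  by (rule order_trans[OF norm_sum]) (simp add: norm_mult)

lemma trig_normsq:
  fixes F :: "('d::finite \<Rightarrow> nat) set"
  assumes F: "finite F"
  shows "(\<integral>\<theta>. indicator torus_box \<theta> * (cmod (\<Sum>k\<in>F. a k * monom_T (\<lambda>i. int (k i)) \<theta>))\<^sup>2 \<partial>lborel)
    = (2*pi)^CARD('d) * (\<Sum>k\<in>F. (cmod (a k))\<^sup>2)"
proof -
  let ?f = "\<lambda>\<theta>. \<Sum>k\<in>F. a k * monom_T (\<lambda>i. int (k i)) \<theta>"
  have "complex_of_real (\<integral>\<theta>. indicator torus_box \<theta> * (cmod (?f \<theta>))\<^sup>2 \<partial>lborel)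
     = ibox (\<lambda>\<theta>. 1 * ?f \<theta> * cnj (?f \<theta>))"
    unfolding integral_complex_of_real[symmetric] ibox_def
    by (intro Bochner_Integration.integral_cong refl) (simp add: complex_norm_square[unfolded of_real_power] scaleR_conv_of_real del: cnj_sum)
  also have "\<dots> = (\<Sum>k\<in>F. \<Sum>l\<in>F. a k * cnj (a l) * ibox (\<lambda>\<theta>. 1 * monom_T (\<lambda>i. int (k i)) \<theta> * cnj (monom_T (\<lambda>i. int (l i)) \<theta>)))"
    by (rule expand[where K=1]) (use F in auto)
  also have "\<dots> = (\<Sum>k\<in>F. \<Sum>l\<in>F. a k * cnj (a l) * (if k = l then complex_of_real ((2*pi)^CARD('d)) else 0))"
  proof (intro sum.cong refl)
    fix k l :: "'d \<Rightarrow> nat"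
    have e: "((\<lambda>i. int (k i) - int (l i)) = (\<lambda>_. 0)) = (k = l)"
      by (auto simp: fun_eq_iff)
    show "a k * cnj (a l) * ibox (\<lambda>\<theta>. 1 * monom_T (\<lambda>i. int (k i)) \<theta> * cnj (monom_T (\<lambda>i. int (l i)) \<theta>)) =
          a k * cnj (a l) * (if k = l then complex_of_real ((2*pi)^CARD('d)) else 0)"
      by (simp add: monom_T_mult_cnj ibox_monom e)
  qed
  also have "\<dots> = complex_of_real ((2*pi)^CARD('d) * (\<Sum>k\<in>F. (cmod (a k))\<^sup>2))"
    using F by (simp add: if_distrib sum_distrib_left complex_norm_square[unfolded of_real_power] mult_ac cong: if_cong)
  finally show ?thesis by (simp only: of_real_eq_iff)
qed

lemma trig_sq_integrable:
  "integrable lborel (\<lambda>\<theta>. indicator torus_box \<theta> * (cmod (\<Sum>k\<in>F. a k * monom_T (\<lambda>i. int (k i)) \<theta>))\<^sup>2)"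
  for F :: "('d::finite \<Rightarrow> nat) set"
proof (rule integrableI_bounded_set[where A=torus_box and B="(\<Sum>k\<in>F. cmod (a k))\<^sup>2"])
  show "AE x in lborel. x \<in> torus_box \<longrightarrow> norm (indicator torus_box x * (cmod (\<Sum>k\<in>F. a k * monom_T (\<lambda>i. int (k i)) x))\<^sup>2) \<le> (\<Sum>k\<in>F. cmod (a k))\<^sup>2"
    by (auto intro!: power_mono trig_bound)
qed (auto simp: torus_box_def emeasure_lborel_cbox_eq)

lemma bound_weak:
  fixes \<phi> :: "real^'d::finite \<Rightarrow> complex"
  assumes "Linfty_T \<phi>"
  obtains M :: real where "M \<ge> 0"
    "\<And>F G a b. finite F \<Longrightarrow> finite G \<Longrightarrow>
       cmod (\<Sum>k\<in>F. \<Sum>l\<in>G. a k * cnj (b l) * tm \<phi> k l) \<le> M/2 * ((\<Sum>k\<in>F. (cmod (a k))\<^sup>2) + (\<Sum>l\<in>G. (cmod (b l))\<^sup>2))"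
proof -
  from assms obtain B where meas[measurable]: "\<phi> \<in> borel_measurable lborel"
    and AEB: "AE \<theta> in lborel. \<theta> \<in> torus_box \<longrightarrow> cmod (\<phi> \<theta>) \<le> B"
    unfolding Linfty_T_def by blast
  define M where "M = max B 0"
  have M0: "M \<ge> 0" by (simp add: M_def)
  have AEM: "AE \<theta> in lborel. \<theta> \<in> torus_box \<longrightarrow> cmod (\<phi> \<theta>) \<le> M"
    using AEB by eventually_elim (auto simp: M_def)
  have meas'[measurable]: "\<phi> \<in> borel_measurable borel" using meas by simp
  define c :: real where "c = 1/(2*pi)^CARD('d)"
  have c0: "c > 0" by (simp add: c_def)
  have cc: "c * (2*pi)^CARD('d) = 1" by (simp add: c_def)
  show ?thesis
  proof (rule that[OF M0])
    fix F G :: "('d \<Rightarrow> nat) set" and a b :: "('d \<Rightarrow> nat) \<Rightarrow> complex"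
    assume F: "finite F" and G: "finite G"
    define f where "f \<theta> = (\<Sum>k\<in>F. a k * monom_T (\<lambda>i. int (k i)) \<theta>)" for \<theta>
    define g where "g \<theta> = (\<Sum>l\<in>G. b l * monom_T (\<lambda>i. int (l i)) \<theta>)" for \<theta>
    have fm[measurable]: "f \<in> borel_measurable borel" "g \<in> borel_measurable borel"
      unfolding f_def g_def by measurable
    have S: "(\<Sum>k\<in>F. \<Sum>l\<in>G. a k * cnj (b l) * tm \<phi> k l) = c *\<^sub>R ibox (\<lambda>\<theta>. \<phi> \<theta> * f \<theta> * cnj (g \<theta>))"
      unfolding f_def g_def expand[OF meas AEM F G]
      by (simp add: tm_def L2_inner_ibox c_def scaleR_sum_right mult.assoc)
    have int1: "integrable lborel (\<lambda>\<theta>. indicator torus_box \<theta> *\<^sub>R (\<phi> \<theta> * f \<theta> * cnj (g \<theta>)))"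
      apply (rule ibox_integrable[where K="M * (\<Sum>k\<in>F. cmod (a k)) * (\<Sum>l\<in>G. cmod (b l))"])
       apply measurable
      using AEM
    proof eventually_elim
      case (elim \<theta>)
      show ?case
      proof
        assume "\<theta> \<in> torus_box"
        then have "cmod (\<phi> \<theta>) \<le> M" using elim by blast
        moreover have "cmod (f \<theta>) \<le> (\<Sum>k\<in>F. cmod (a k))" "cmod (g \<theta>) \<le> (\<Sum>l\<in>G. cmod (b l))"
          unfolding f_def g_def by (rule trig_bound)+
        ultimately show "cmod (\<phi> \<theta> * f \<theta> * cnj (g \<theta>)) \<le> M * (\<Sum>k\<in>F. cmod (a k)) * (\<Sum>l\<in>G. cmod (b l))"
          unfolding norm_mult complex_mod_cnj
          using M0 by (intro mult_mono) (auto intro!: sum_nonneg mult_nonneg_nonneg)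
      qed
    qed
    have "cmod (ibox (\<lambda>\<theta>. \<phi> \<theta> * f \<theta> * cnj (g \<theta>))) \<le>
        (\<integral>\<theta>. norm (indicator torus_box \<theta> *\<^sub>R (\<phi> \<theta> * f \<theta> * cnj (g \<theta>))) \<partial>lborel)"
      unfolding ibox_def by (rule integral_norm_bound)
    also have "\<dots> \<le> (\<integral>\<theta>. M/2 * (indicator torus_box \<theta> * (cmod (f \<theta>))\<^sup>2) + M/2 * (indicator torus_box \<theta> * (cmod (g \<theta>))\<^sup>2) \<partial>lborel)"
    proof (rule integral_mono_AE)
      show "integrable lborel (\<lambda>\<theta>. norm (indicator torus_box \<theta> *\<^sub>R (\<phi> \<theta> * f \<theta> * cnj (g \<theta>))))"
        using int1 by (rule integrable_norm)
      show "integrable lborel (\<lambda>\<theta>. M/2 * (indicator torus_box \<theta> * (cmod (f \<theta>))\<^sup>2) + M/2 * (indicator torus_box \<theta> * (cmod (g \<theta>))\<^sup>2))"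
        unfolding f_def g_def by (intro Bochner_Integration.integrable_add integrable_mult_right trig_sq_integrable)
      show "AE \<theta> in lborel. norm (indicator torus_box \<theta> *\<^sub>R (\<phi> \<theta> * f \<theta> * cnj (g \<theta>))) \<le> M/2 * (indicator torus_box \<theta> * (cmod (f \<theta>))\<^sup>2) + M/2 * (indicator torus_box \<theta> * (cmod (g \<theta>))\<^sup>2)"
        using AEM
      proof eventually_elim
        case (elim \<theta>)
        show ?case
        proof (cases "\<theta> \<in> torus_box")
          case True
          then have p: "cmod (\<phi> \<theta>) \<le> M" using elim by blast
          have "cmod (\<phi> \<theta>) * (cmod (f \<theta>) * cmod (g \<theta>)) \<le> M * (cmod (f \<theta>) * cmod (g \<theta>))"
            by (rule mult_right_mono[OF p]) simp
          also have "\<dots> \<le> M * (((cmod (f \<theta>))\<^sup>2 + (cmod (g \<theta>))\<^sup>2) / 2)"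
            by (rule mult_left_mono[OF _ M0]) (use sum_squares_bound[of "cmod (f \<theta>)" "cmod (g \<theta>)"] in \<open>simp add: field_simps\<close>)
          finally show ?thesis using True
            by (simp add: norm_mult complex_mod_cnj field_simps)
        next
          case False
          then show ?thesis by simp
        qed
      qed
    qed
    also have "\<dots> = M/2 * ((2*pi)^CARD('d) * (\<Sum>k\<in>F. (cmod (a k))\<^sup>2)) + M/2 * ((2*pi)^CARD('d) * (\<Sum>l\<in>G. (cmod (b l))\<^sup>2))"
      unfolding f_def g_def
      by (simp add: trig_sq_integrable trig_normsq[OF F] trig_normsq[OF G])
    finally have I: "cmod (ibox (\<lambda>\<theta>. \<phi> \<theta> * f \<theta> * cnj (g \<theta>))) \<le> (2*pi)^CARD('d) * (M/2 * ((\<Sum>k\<in>F. (cmod (a k))\<^sup>2) + (\<Sum>l\<in>G. (cmod (b l))\<^sup>2)))"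
      by (simp add: algebra_simps)
    have "cmod (\<Sum>k\<in>F. \<Sum>l\<in>G. a k * cnj (b l) * tm \<phi> k l) = c * cmod (ibox (\<lambda>\<theta>. \<phi> \<theta> * f \<theta> * cnj (g \<theta>)))"
      using c0 by (simp add: S)
    also have "\<dots> \<le> c * ((2*pi)^CARD('d) * (M/2 * ((\<Sum>k\<in>F. (cmod (a k))\<^sup>2) + (\<Sum>l\<in>G. (cmod (b l))\<^sup>2))))"
      by (rule mult_left_mono[OF I]) (use c0 in simp)
    also have "\<dots> = M/2 * ((\<Sum>k\<in>F. (cmod (a k))\<^sup>2) + (\<Sum>l\<in>G. (cmod (b l))\<^sup>2))"
      using cc by (simp add: mult.assoc[symmetric])
    finally show "cmod (\<Sum>k\<in>F. \<Sum>l\<in>G. a k * cnj (b l) * tm \<phi> k l) \<le> M/2 * ((\<Sum>k\<in>F. (cmod (a k))\<^sup>2) + (\<Sum>l\<in>G. (cmod (b l))\<^sup>2))" .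
  qed
qed


lemma bound_strong:
  fixes \<phi> :: "real^'d::finite \<Rightarrow> complex"
  assumes "Linfty_T \<phi>"
  obtains M :: real where "M \<ge> 0"
    "\<And>F G a b. finite F \<Longrightarrow> finite G \<Longrightarrow>
       cmod (\<Sum>k\<in>F. \<Sum>l\<in>G. a k * cnj (b l) * tm \<phi> k l) \<le> M * sqrt (\<Sum>k\<in>F. (cmod (a k))\<^sup>2) * sqrt (\<Sum>l\<in>G. (cmod (b l))\<^sup>2)"
proof -
  obtain M where M0: "M \<ge> 0" and W: "\<And>F G a b. finite F \<Longrightarrow> finite G \<Longrightarrow>
       cmod (\<Sum>k\<in>F. \<Sum>l\<in>G. a k * cnj (b l) * tm \<phi> k l) \<le> M/2 * ((\<Sum>k\<in>F. (cmod (a k))\<^sup>2) + (\<Sum>l\<in>G. (cmod (b l))\<^sup>2))"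
    using bound_weak[OF assms] by blast
  show ?thesis
  proof (rule that[OF M0])
    fix F G :: "('d \<Rightarrow> nat) set" and a b :: "('d \<Rightarrow> nat) \<Rightarrow> complex"
    assume F: "finite F" and G: "finite G"
    define A where "A = (\<Sum>k\<in>F. (cmod (a k))\<^sup>2)"
    define B where "B = (\<Sum>l\<in>G. (cmod (b l))\<^sup>2)"
    have A0: "A \<ge> 0" and B0: "B \<ge> 0" unfolding A_def B_def by (auto intro: sum_nonneg)
    have R0: "M * sqrt A * sqrt B \<ge> 0" using M0 A0 B0 by simp
    show "cmod (\<Sum>k\<in>F. \<Sum>l\<in>G. a k * cnj (b l) * tm \<phi> k l) \<le> M * sqrt (\<Sum>k\<in>F. (cmod (a k))\<^sup>2) * sqrt (\<Sum>l\<in>G. (cmod (b l))\<^sup>2)"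
    proof (cases "A = 0 \<or> B = 0")
      case True
      then have "(\<forall>k\<in>F. a k = 0) \<or> (\<forall>l\<in>G. b l = 0)"
        unfolding A_def B_def using F G by (auto simp: sum_nonneg_eq_0_iff)
      then have "(\<Sum>k\<in>F. \<Sum>l\<in>G. a k * cnj (b l) * tm \<phi> k l) = 0" by auto
      then show ?thesis using R0 unfolding A_def B_def by simp
    next
      case False
      then have Ap: "A > 0" and Bp: "B > 0" using A0 B0 by auto
      define s where "s = sqrt (sqrt B / sqrt A)"
      have sp: "s > 0" using Ap Bp by (simp add: s_def)
      have s2: "s\<^sup>2 = sqrt B / sqrt A" using Ap Bp by (simp add: s_def)
      define a' where "a' k = complex_of_real s * a k" for k
      define b' where "b' l = b l / complex_of_real s" for l
      have same: "(\<Sum>k\<in>F. \<Sum>l\<in>G. a' k * cnj (b' l) * tm \<phi> k l) = (\<Sum>k\<in>F. \<Sum>l\<in>G. a k * cnj (b l) * tm \<phi> k l)"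
        using sp by (intro sum.cong refl) (simp add: a'_def b'_def field_simps)
      have sa: "(\<Sum>k\<in>F. (cmod (a' k))\<^sup>2) = s\<^sup>2 * A"
        unfolding A_def a'_def using sp by (simp add: norm_mult power_mult_distrib sum_distrib_left)
      have sb: "(\<Sum>l\<in>G. (cmod (b' l))\<^sup>2) = B / s\<^sup>2"
        unfolding B_def b'_def using sp by (simp add: norm_divide power_divide sum_divide_distrib)
      define u where "u = sqrt A"
      define v where "v = sqrt B"
      have up: "u > 0" and vp: "v > 0" using Ap Bp by (simp_all add: u_def v_def)
      have Au: "A = u\<^sup>2" and Bv: "B = v\<^sup>2" using A0 B0 by (simp_all add: u_def v_def)
      have s2': "s\<^sup>2 = v / u" unfolding s2 u_def v_def ..
      have e1: "s\<^sup>2 * A = sqrt A * sqrt B"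
      proof -
        have "s\<^sup>2 * A = v / u * u\<^sup>2" by (simp only: s2' Au)
        also have "\<dots> = u * v" using up by (simp add: power2_eq_square)
        finally show ?thesis by (simp only: u_def v_def)
      qed
      have e2: "B / s\<^sup>2 = sqrt A * sqrt B"
      proof -
        have "B / s\<^sup>2 = v\<^sup>2 / (v / u)" by (simp only: s2' Bv)
        also have "\<dots> = u * v" using up vp by (simp add: power2_eq_square)
        finally show ?thesis by (simp only: u_def v_def)
      qed
      have "cmod (\<Sum>k\<in>F. \<Sum>l\<in>G. a k * cnj (b l) * tm \<phi> k l) \<le> M/2 * (s\<^sup>2 * A + B / s\<^sup>2)"
        using W[OF F G, of a' b'] unfolding same sa sb .
      also have "\<dots> = M * sqrt A * sqrt B" unfolding e1 e2 by simp
      finally show ?thesis unfolding A_def B_def .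
    qed
  qed
qed

lemma monom_T_cnj: "cnj (monom_T m \<theta>) = monom_T (\<lambda>i. - m i) \<theta>"
  unfolding monom_T_def by (simp add: exp_cnj cnj_sum sum_negf)

lemma fourier_tm: "fourier_coeff \<phi> (\<lambda>i. int (k i) - int (l i)) = tm \<phi> l k"
proof -
  have "cnj (monom_T (\<lambda>i. int (k i) - int (l i)) \<theta>) = monom_T (\<lambda>i. int (l i)) \<theta> * cnj (monom_T (\<lambda>i. int (k i)) \<theta>)" for \<theta>
    by (simp only: monom_T_cnj[of "\<lambda>i. int (k i) - int (l i)"] monom_T_mult_cnj minus_diff_eq)
  then show ?thesis
    unfolding fourier_coeff_def tm_def L2_inner_def by (simp add: mult.assoc)
qed


lemma infsum_of_real':
  assumes "f summable_on A"
  shows "infsum (\<lambda>x. complex_of_real (f x)) A = of_real (infsum f A)"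
  by (metis assms has_sum_infsum has_sum_of_real_iff infsumI)

lemma infsum_sum_swap:
  fixes f :: "'i \<Rightarrow> 'a \<Rightarrow> complex"
  assumes "finite I" "\<And>i. i \<in> I \<Longrightarrow> f i summable_on A"
  shows "(\<lambda>x. \<Sum>i\<in>I. f i x) summable_on A \<and> infsum (\<lambda>x. \<Sum>i\<in>I. f i x) A = (\<Sum>i\<in>I. infsum (f i) A)"
  using assms
proof (induction I rule: finite_induct)
  case empty
  then show ?case by simp
next
  case (insert i I)
  then have s1: "f i summable_on A" and IH: "(\<lambda>x. \<Sum>i\<in>I. f i x) summable_on A" "infsum (\<lambda>x. \<Sum>i\<in>I. f i x) A = (\<Sum>i\<in>I. infsum (f i) A)"
    by auto
  show ?case
    using insert(1,2) s1 IH
    by (simp add: summable_on_add infsum_add)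
qed

lemma infsum_bound_finite:
  fixes f :: "'a \<Rightarrow> complex"
  assumes "f summable_on A" "\<And>F. finite F \<Longrightarrow> F \<subseteq> A \<Longrightarrow> cmod (sum f F) \<le> K"
  shows "cmod (infsum f A) \<le> K"
proof (rule field_le_epsilon)
  fix e :: real assume e: "0 < e"
  obtain F where F: "finite F" "F \<subseteq> A" "dist (sum f F) (infsum f A) \<le> e"
    using infsum_finite_approximation[OF assms(1) e] by blast
  have "cmod (infsum f A) \<le> cmod (sum f F) + dist (sum f F) (infsum f A)"
    by (metis dist_commute dist_norm norm_triangle_sub)
  then show "cmod (infsum f A) \<le> K + e"
    using assms(2)[OF F(1,2)] F(3) by linarith
qed

definition nsq :: "(('d::finite \<Rightarrow> nat) \<Rightarrow> complex) \<Rightarrow> real" where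
  "nsq a = (\<Sum>\<^sub>\<infinity>k. (cmod (a k))\<^sup>2)"

lemma H2_norm_nsq: "H2_norm a = sqrt (nsq a)"
  by (simp add: H2_norm_def nsq_def)

lemma nsq_nonneg: "nsq a \<ge> 0"
  unfolding nsq_def by (rule infsum_nonneg) simp

lemma H2_norm_nonneg: "H2_norm a \<ge> 0"
  by (simp add: H2_norm_nsq nsq_nonneg)

lemma H2_sq: "a \<in> H2 \<Longrightarrow> (\<lambda>k. (cmod (a k))\<^sup>2) summable_on UNIV"
  by (simp add: H2_def)

lemma H2_prod_abs:
  assumes "a \<in> H2" "b \<in> H2"
  shows "(\<lambda>k. norm (a k * cnj (b k))) summable_on UNIV"
proof (rule abs_summable_product)
  show "(\<lambda>i. norm (a i * a i)) summable_on UNIV"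
    using H2_sq[OF assms(1)] by (simp add: norm_mult power2_eq_square)
  show "(\<lambda>i. norm (cnj (b i) * cnj (b i))) summable_on UNIV"
    using H2_sq[OF assms(2)] by (simp add: norm_mult power2_eq_square)
qed

lemma H2_prod_summable:
  "a \<in> H2 \<Longrightarrow> b \<in> H2 \<Longrightarrow> (\<lambda>k. a k * cnj (b k)) summable_on UNIV"
  by (rule abs_summable_summable[OF H2_prod_abs])

lemma H2_finite_supp:
  assumes "finite F" "\<And>k. k \<notin> F \<Longrightarrow> a k = 0"
  shows "a \<in> H2"
proof -
  have "(\<lambda>k. (cmod (a k))\<^sup>2) summable_on UNIV \<longleftrightarrow> (\<lambda>k. (cmod (a k))\<^sup>2) summable_on F"
    by (rule summable_on_cong_neutral) (use assms in auto)
  then show ?thesis using assms by (simp add: H2_def)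
qed

lemma H2_monom_in: "H2_monom k \<in> H2"
  by (rule H2_finite_supp[of "{k}"]) (auto simp: H2_monom_def)

lemma H2_add:
  assumes "a \<in> H2" "b \<in> H2"
  shows "(\<lambda>k. a k + b k) \<in> H2"
proof -
  have "(\<lambda>k. 2 * (cmod (a k))\<^sup>2 + 2 * (cmod (b k))\<^sup>2) summable_on UNIV"
    using H2_sq[OF assms(1)] H2_sq[OF assms(2)]
    by (intro summable_on_add summable_on_cmult_right)
  moreover have "(cmod (a k + b k))\<^sup>2 \<le> 2 * (cmod (a k))\<^sup>2 + 2 * (cmod (b k))\<^sup>2" for k
  proof -
    have "cmod (a k + b k) \<le> cmod (a k) + cmod (b k)" by (rule norm_triangle_ineq)
    then have "(cmod (a k + b k))\<^sup>2 \<le> (cmod (a k) + cmod (b k))\<^sup>2"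
      by (rule power_mono) simp
    also have "\<dots> \<le> 2 * (cmod (a k))\<^sup>2 + 2 * (cmod (b k))\<^sup>2"
      using sum_squares_bound[of "cmod (a k)" "cmod (b k)"] by (simp add: power2_sum)
    finally show ?thesis .
  qed
  ultimately show ?thesis
    unfolding H2_def by (auto intro: summable_on_comparison_test)
qed

lemma H2_scale:
  assumes "a \<in> H2"
  shows "(\<lambda>k. c * a k) \<in> H2"
  using summable_on_cmult_right[OF H2_sq[OF assms], of "(cmod c)\<^sup>2"]
  by (simp add: H2_def norm_mult power_mult_distrib)

lemma H2_diff:
  assumes "a \<in> H2" "b \<in> H2"
  shows "(\<lambda>k. a k - b k) \<in> H2"
  using H2_add[OF assms(1) H2_scale[OF assms(2), of "-1"]] by simp

lemma H2_J: "a \<in> H2 \<Longrightarrow> J_H2 a \<in> H2"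
  by (simp add: H2_def J_H2_def)

definition trunc :: "('i \<Rightarrow> bool) \<Rightarrow> ('i \<Rightarrow> complex) \<Rightarrow> 'i \<Rightarrow> complex" where
  "trunc P a = (\<lambda>k. if P k then a k else 0)"

lemma H2_trunc: "finite F \<Longrightarrow> trunc (\<lambda>k. k \<in> F) a \<in> H2"
  by (rule H2_finite_supp[of F]) (auto simp: trunc_def)

lemma inner_self: "a \<in> H2 \<Longrightarrow> H2_inner a a = of_real (nsq a)"
  unfolding H2_inner_def nsq_def
  by (subst infsum_of_real'[symmetric]) (auto simp: H2_def complex_norm_square[unfolded of_real_power])

lemma inner_add_left:
  assumes "a \<in> H2" "b \<in> H2" "c \<in> H2"
  shows "H2_inner (\<lambda>k. a k + b k) c = H2_inner a c + H2_inner b c"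
  unfolding H2_inner_def
  by (subst infsum_add[symmetric]) (auto simp: algebra_simps intro: H2_prod_summable assms)

lemma inner_scale_left: "H2_inner (\<lambda>k. s * a k) b = s * H2_inner a b"
  unfolding H2_inner_def by (simp add: mult.assoc infsum_cmult_right')

lemma inner_cnj_sym: "H2_inner b a = cnj (H2_inner a b)"
  unfolding H2_inner_def infsum_cnj[symmetric] by (simp add: mult.commute)

lemma inner_add_right:
  assumes "a \<in> H2" "b \<in> H2" "c \<in> H2"
  shows "H2_inner c (\<lambda>k. a k + b k) = H2_inner c a + H2_inner c b"
  using inner_add_left[OF assms] by (metis complex_cnj_add inner_cnj_sym)

lemma inner_scale_right: "H2_inner a (\<lambda>k. s * b k) = cnj s * H2_inner a b"
  by (metis complex_cnj_mult inner_cnj_sym inner_scale_left)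

lemma inner_diff_left:
  assumes "a \<in> H2" "b \<in> H2" "c \<in> H2"
  shows "H2_inner (\<lambda>k. a k - b k) c = H2_inner a c - H2_inner b c"
  using inner_add_left[OF assms(1) H2_scale[OF assms(2), of "-1"] assms(3)] inner_scale_left[of "-1" b c]
  by simp

lemma inner_monom_right: "H2_inner a (H2_monom k) = a k"
proof -
  have "H2_inner a (H2_monom k) = infsum (\<lambda>j. a j * cnj (H2_monom k j)) {k}"
    unfolding H2_inner_def by (rule infsum_cong_neutral) (auto simp: H2_monom_def)
  then show ?thesis by (simp add: H2_monom_def)
qed

lemma inner_monom_left: "H2_inner (H2_monom k) b = cnj (b k)"
  by (metis inner_cnj_sym inner_monom_right)

lemma CS_finite:
  fixes x y :: "'i \<Rightarrow> real"
  shows "(\<Sum>k\<in>F. x k * y k) \<le> sqrt (\<Sum>k\<in>F. (x k)\<^sup>2) * sqrt (\<Sum>k\<in>F. (y k)\<^sup>2)"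
proof -
  have "(\<Sum>k\<in>F. x k * y k) \<le> sqrt ((\<Sum>k\<in>F. x k * y k)\<^sup>2)" by simp
  also have "\<dots> \<le> sqrt ((\<Sum>k\<in>F. (x k)\<^sup>2) * (\<Sum>k\<in>F. (y k)\<^sup>2))"
    by (rule real_sqrt_le_mono) (rule Cauchy_Schwarz_ineq_sum)
  finally show ?thesis by (simp add: real_sqrt_mult)
qed

lemma CS:
  assumes "a \<in> H2" "b \<in> H2"
  shows "cmod (H2_inner a b) \<le> H2_norm a * H2_norm b"
proof -
  have "cmod (H2_inner a b) \<le> (\<Sum>\<^sub>\<infinity>k. cmod (a k * cnj (b k)))"
    unfolding H2_inner_def by (rule norm_infsum_bound) (rule H2_prod_abs[OF assms])
  also have "\<dots> \<le> H2_norm a * H2_norm b"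
  proof (rule infsum_le_finite_sums)
    show "(\<lambda>k. cmod (a k * cnj (b k))) summable_on UNIV" by (rule H2_prod_abs[OF assms])
    fix F :: "('a \<Rightarrow> nat) set" assume F: "finite F"
    have "(\<Sum>k\<in>F. cmod (a k * cnj (b k))) = (\<Sum>k\<in>F. cmod (a k) * cmod (b k))"
      by (simp add: norm_mult)
    also have "\<dots> \<le> sqrt (\<Sum>k\<in>F. (cmod (a k))\<^sup>2) * sqrt (\<Sum>k\<in>F. (cmod (b k))\<^sup>2)"
      by (rule CS_finite)
    also have "\<dots> \<le> H2_norm a * H2_norm b"
      unfolding H2_norm_def
      by (intro mult_mono real_sqrt_le_mono finite_sum_le_infsum H2_sq assms F) (auto intro: infsum_nonneg sum_nonneg)
    finally show "(\<Sum>k\<in>F. cmod (a k * cnj (b k))) \<le> H2_norm a * H2_norm b" .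
  qed
  finally show ?thesis .
qed

lemma tail_small:
  assumes "a \<in> H2" "e > 0"
  shows "\<exists>F. finite F \<and> H2_norm (\<lambda>k. a k - trunc (\<lambda>k. k \<in> F) a k) \<le> e"
proof -
  have e2: "e\<^sup>2 > 0" using assms by simp
  obtain F where F: "finite F" "dist (\<Sum>k\<in>F. (cmod (a k))\<^sup>2) (nsq a) \<le> e\<^sup>2"
    using infsum_finite_approximation[OF H2_sq[OF assms(1)] e2] unfolding nsq_def by blast
  have "nsq (\<lambda>k. a k - trunc (\<lambda>k. k \<in> F) a k) = infsum (\<lambda>k. (cmod (a k))\<^sup>2) (UNIV - F)"
    unfolding nsq_def by (rule infsum_cong_neutral) (auto simp: trunc_def)
  also have "\<dots> = nsq a - (\<Sum>k\<in>F. (cmod (a k))\<^sup>2)"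
    unfolding nsq_def
    by (subst infsum_Diff) (use H2_sq[OF assms(1)] F(1) in \<open>auto intro: summable_on_subset_banach\<close>)
  also have "\<dots> \<le> e\<^sup>2" using F(2) by (simp add: dist_real_def)
  finally have "sqrt (nsq (\<lambda>k. a k - trunc (\<lambda>k. k \<in> F) a k)) \<le> sqrt (e\<^sup>2)"
    by (rule real_sqrt_le_mono)
  then show ?thesis using F(1) assms(2) by (auto simp: H2_norm_nsq)
qed


lemma sq_le_aux:
  fixes S K :: real
  assumes "S \<ge> 0" "S \<le> K * sqrt S" "K \<ge> 0"
  shows "S \<le> K\<^sup>2"
proof (cases "S = 0")
  case True then show ?thesis by simp
next
  case False
  then have p: "sqrt S > 0" using assms(1) by simp
  have "sqrt S * sqrt S \<le> K * sqrt S" using assms(2) real_sqrt_mult_self[of S] abs_of_nonneg[OF assms(1)] by linarith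
  then have "sqrt S \<le> K" by (rule mult_right_le_imp_le[OF _ p])
  then have "(sqrt S)\<^sup>2 \<le> K\<^sup>2" by (rule power_mono) (simp add: assms(1))
  then show ?thesis using assms(1) by simp
qed

lemma H2_bound:
  assumes "\<And>F. finite F \<Longrightarrow> (\<Sum>k\<in>F. (cmod (a k))\<^sup>2) \<le> K"
  shows "a \<in> H2 \<and> nsq a \<le> K"
proof -
  have s: "(\<lambda>k. (cmod (a k))\<^sup>2) summable_on UNIV"
    by (rule nonneg_bdd_above_summable_on) (use assms in \<open>auto intro!: bdd_aboveI2\<close>)
  moreover have "nsq a \<le> K"
    unfolding nsq_def by (rule infsum_le_finite_sums[OF s]) (use assms in auto)
  ultimately show ?thesis by (simp add: H2_def)
qed

lemma zero_by_eps:
  fixes w :: complex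
  assumes "K \<ge> 0" "\<And>e. e > 0 \<Longrightarrow> cmod w \<le> e * K"
  shows "w = 0"
proof (rule ccontr)
  assume "w \<noteq> 0"
  then have p: "cmod w > 0" by simp
  define e where "e = cmod w / (K + 1)"
  have e: "e > 0" using p assms(1) by (simp add: e_def)
  have "cmod w \<le> e * K" by (rule assms(2)[OF e])
  also have "\<dots> < e * (K + 1)" using e by simp
  also have "\<dots> = cmod w" using assms(1) by (simp add: e_def)
  finally show False by simp
qed

lemma nsq_trunc: "finite F \<Longrightarrow> nsq (trunc (\<lambda>k. k \<in> F) a) = (\<Sum>k\<in>F. (cmod (a k))\<^sup>2)"
proof -
  assume F: "finite F"
  have "nsq (trunc (\<lambda>k. k \<in> F) a) = infsum (\<lambda>k. (cmod (a k))\<^sup>2) F"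
    unfolding nsq_def by (rule infsum_cong_neutral) (auto simp: trunc_def)
  then show ?thesis using F by simp
qed

lemma inner_trunc_left: "finite F \<Longrightarrow> H2_inner (trunc (\<lambda>k. k \<in> F) a) b = (\<Sum>k\<in>F. a k * cnj (b k))"
proof -
  assume F: "finite F"
  have "H2_inner (trunc (\<lambda>k. k \<in> F) a) b = infsum (\<lambda>k. a k * cnj (b k)) F"
    unfolding H2_inner_def by (rule infsum_cong_neutral) (auto simp: trunc_def)
  then show ?thesis using F by simp
qed

lemma adj_exists:
  assumes "\<exists>z\<in>H2. \<forall>x\<in>H2. H2_inner (T x) y = H2_inner x z"
  shows "H2_adj T y \<in> H2 \<and> (\<forall>x\<in>H2. H2_inner (T x) y = H2_inner x (H2_adj T y))"
proof -
  have uniq: "z1 = z2" if "z1 \<in> H2" "z2 \<in> H2" "\<forall>x\<in>H2. H2_inner (T x) y = H2_inner x z1"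
       "\<forall>x\<in>H2. H2_inner (T x) y = H2_inner x z2" for z1 z2
  proof
    fix k
    have "H2_inner (H2_monom k) z1 = H2_inner (H2_monom k) z2"
      using that(3)[rule_format, OF H2_monom_in[of k]] that(4)[rule_format, OF H2_monom_in[of k]] by simp
    then show "z1 k = z2 k" by (simp add: inner_monom_left)
  qed
  from assms obtain z where z: "z \<in> H2" "\<forall>x\<in>H2. H2_inner (T x) y = H2_inner x z" by blast
  have "H2_adj T y = z"
    unfolding H2_adj_def by (rule the_equality) (use z uniq in auto)
  then show ?thesis using z by simp
qed

lemma adj_eq:
  assumes "z \<in> H2" "\<forall>x\<in>H2. H2_inner (T x) y = H2_inner x z"
  shows "H2_adj T y = z"
proof -
  have "H2_adj T y \<in> H2 \<and> (\<forall>x\<in>H2. H2_inner (T x) y = H2_inner x (H2_adj T y))"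
    by (rule adj_exists) (use assms in blast)
  then have a: "H2_adj T y \<in> H2" "\<forall>x\<in>H2. H2_inner x z = H2_inner x (H2_adj T y)"
    using assms by auto
  show ?thesis
  proof
    fix k
    have "H2_inner (H2_monom k) z = H2_inner (H2_monom k) (H2_adj T y)"
      using a H2_monom_in by auto
    then show "H2_adj T y k = z k" by (simp add: inner_monom_left)
  qed
qed

locale toep =
  fixes t :: "('d::finite \<Rightarrow> nat) \<Rightarrow> ('d \<Rightarrow> nat) \<Rightarrow> complex" and M :: real
  assumes M0: "M \<ge> 0"
    and TB: "\<And>F G a b. finite F \<Longrightarrow> finite G \<Longrightarrow>
      cmod (\<Sum>k\<in>F. \<Sum>l\<in>G. a k * cnj (b l) * t k l) \<le> M * sqrt (\<Sum>k\<in>F. (cmod (a k))\<^sup>2) * sqrt (\<Sum>l\<in>G. (cmod (b l))\<^sup>2)"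
begin

definition Tm :: "(('d \<Rightarrow> nat) \<Rightarrow> complex) \<Rightarrow> ('d \<Rightarrow> nat) \<Rightarrow> complex" where
  "Tm a = (\<lambda>l. \<Sum>\<^sub>\<infinity>k. a k * t k l)"

lemma col_H2: "(\<lambda>k. cnj (t k l)) \<in> H2"
proof -
  have "(\<Sum>k\<in>F. (cmod (cnj (t k l)))\<^sup>2) \<le> M\<^sup>2" if F: "finite F" for F
  proof (rule sq_le_aux)
    let ?S = "\<Sum>k\<in>F. (cmod (cnj (t k l)))\<^sup>2"
    show "?S \<ge> 0" by (simp add: sum_nonneg)
    have A: "cmod (\<Sum>k\<in>F. cnj (t k l) * t k l) \<le> M * sqrt ?S"
      using TB[OF F, of "{l}" "\<lambda>k. cnj (t k l)" "\<lambda>_. 1"] by simp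
    have B: "(\<Sum>k\<in>F. cnj (t k l) * t k l) = of_real ?S"
      by (simp add: complex_norm_square[unfolded of_real_power] mult.commute)
    have C: "cmod (of_real ?S) = ?S"
      by (simp only: norm_of_real abs_of_nonneg[OF sum_nonneg] zero_le_power2)
    show "?S \<le> M * sqrt ?S" using A unfolding B C .
  qed (rule M0)
  then show ?thesis by (rule conjunct1[OF H2_bound])
qed

lemma Tm_inner: "Tm a l = H2_inner a (\<lambda>k. cnj (t k l))"
  by (simp add: Tm_def H2_inner_def)

lemma Tm_summable: "a \<in> H2 \<Longrightarrow> (\<lambda>k. a k * t k l) summable_on UNIV"
  using H2_prod_summable[OF _ col_H2, of a l] by simp

lemma Tm_H2:
  assumes a: "a \<in> H2"
  shows "Tm a \<in> H2 \<and> nsq (Tm a) \<le> M\<^sup>2 * nsq a"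
proof -
  have "(\<Sum>l\<in>G. (cmod (Tm a l))\<^sup>2) \<le> (M * sqrt (nsq a))\<^sup>2" if G: "finite G" for G
  proof (rule sq_le_aux)
    let ?S = "\<Sum>l\<in>G. (cmod (Tm a l))\<^sup>2"
    let ?b = "Tm a"
    show S0: "?S \<ge> 0" by (simp add: sum_nonneg)
    show "M * sqrt (nsq a) \<ge> 0" by (intro mult_nonneg_nonneg M0 real_sqrt_ge_zero nsq_nonneg)
    have "complex_of_real ?S = (\<Sum>l\<in>G. cnj (?b l) * (\<Sum>\<^sub>\<infinity>k. a k * t k l))"
      by (simp add: complex_norm_square[unfolded of_real_power] Tm_def mult.commute)
    also have "\<dots> = (\<Sum>l\<in>G. \<Sum>\<^sub>\<infinity>k. a k * cnj (?b l) * t k l)"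
      by (simp add: infsum_cmult_right'[symmetric] mult_ac)
    also have "\<dots> = (\<Sum>\<^sub>\<infinity>k. \<Sum>l\<in>G. a k * cnj (?b l) * t k l)"
    proof -
      have "(\<lambda>k. a k * cnj (?b l) * t k l) summable_on UNIV" for l
        using summable_on_cmult_right[OF Tm_summable[OF a, of l], of "cnj (?b l)"]
        by (simp add: mult_ac)
      then show ?thesis using infsum_sum_swap[OF G, of "\<lambda>l k. a k * cnj (?b l) * t k l" UNIV] by simp
    qed
    finally have eq: "complex_of_real ?S = (\<Sum>\<^sub>\<infinity>k. \<Sum>l\<in>G. a k * cnj (?b l) * t k l)" .
    have summ: "(\<lambda>k. \<Sum>l\<in>G. a k * cnj (?b l) * t k l) summable_on UNIV"
    proof -
      have "(\<lambda>k. a k * cnj (?b l) * t k l) summable_on UNIV" for l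
        using summable_on_cmult_right[OF Tm_summable[OF a, of l], of "cnj (?b l)"]
        by (simp add: mult_ac)
      then show ?thesis using infsum_sum_swap[OF G, of "\<lambda>l k. a k * cnj (?b l) * t k l" UNIV] by simp
    qed
    have D: "cmod (\<Sum>\<^sub>\<infinity>k. \<Sum>l\<in>G. a k * cnj (?b l) * t k l) \<le> M * sqrt (nsq a) * sqrt ?S"
    proof (rule infsum_bound_finite[OF summ])
      fix F :: "('d \<Rightarrow> nat) set" assume F: "finite F"
      have "cmod (\<Sum>k\<in>F. \<Sum>l\<in>G. a k * cnj (?b l) * t k l) \<le> M * sqrt (\<Sum>k\<in>F. (cmod (a k))\<^sup>2) * sqrt ?S"
        by (rule TB[OF F G])
      also have "\<dots> \<le> M * sqrt (nsq a) * sqrt ?S"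
        unfolding nsq_def
        by (intro mult_right_mono mult_left_mono real_sqrt_le_mono finite_sum_le_infsum H2_sq a F M0) (auto intro: sum_nonneg)
      finally show "cmod (\<Sum>k\<in>F. \<Sum>l\<in>G. a k * cnj (?b l) * t k l) \<le> M * sqrt (nsq a) * sqrt ?S" .
    qed
    have C: "cmod (of_real ?S) = ?S"
      by (simp only: norm_of_real abs_of_nonneg[OF S0])
    show "?S \<le> M * sqrt (nsq a) * sqrt ?S"
      using D unfolding eq[symmetric] C .
  qed
  then have "Tm a \<in> H2 \<and> nsq (Tm a) \<le> (M * sqrt (nsq a))\<^sup>2" by (rule H2_bound)
  then show ?thesis using nsq_nonneg[of a] by (simp add: power_mult_distrib)
qed

lemma Tm_in: "a \<in> H2 \<Longrightarrow> Tm a \<in> H2"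
  using Tm_H2 by blast

lemma Tm_norm: "a \<in> H2 \<Longrightarrow> H2_norm (Tm a) \<le> M * H2_norm a"
proof -
  assume a: "a \<in> H2"
  have "sqrt (nsq (Tm a)) \<le> sqrt (M\<^sup>2 * nsq a)"
    using Tm_H2[OF a] by (intro real_sqrt_le_mono) simp
  then show ?thesis using M0 by (simp add: H2_norm_nsq real_sqrt_mult)
qed

lemma Tm_bound: "a \<in> H2 \<Longrightarrow> y \<in> H2 \<Longrightarrow> cmod (H2_inner (Tm a) y) \<le> M * H2_norm a * H2_norm y"
  by (rule order_trans[OF CS[OF Tm_in]]) (auto intro: mult_right_mono Tm_norm H2_norm_nonneg)

lemma Tm_add: "a \<in> H2 \<Longrightarrow> b \<in> H2 \<Longrightarrow> Tm (\<lambda>k. a k + b k) = (\<lambda>l. Tm a l + Tm b l)"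
  unfolding Tm_def
  by (rule ext, subst infsum_add[symmetric]) (auto simp: algebra_simps intro: Tm_summable)

lemma Tm_scale: "Tm (\<lambda>k. c * a k) = (\<lambda>l. c * Tm a l)"
  unfolding Tm_def by (simp add: mult.assoc infsum_cmult_right')

lemma Tm_monom: "Tm (H2_monom k) = (\<lambda>l. t k l)"
proof
  fix l
  have "Tm (H2_monom k) l = infsum (\<lambda>j. H2_monom k j * t j l) {k}"
    unfolding Tm_def by (rule infsum_cong_neutral) (auto simp: H2_monom_def)
  then show "Tm (H2_monom k) l = t k l" by (simp add: H2_monom_def)
qed

lemma Tm_trunc: "finite F \<Longrightarrow> Tm (trunc (\<lambda>k. k \<in> F) x) = (\<lambda>l. \<Sum>k\<in>F. x k * t k l)"
proof
  fix l assume F: "finite F"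
  have "Tm (trunc (\<lambda>k. k \<in> F) x) l = infsum (\<lambda>k. x k * t k l) F"
    unfolding Tm_def by (rule infsum_cong_neutral) (auto simp: trunc_def)
  then show "Tm (trunc (\<lambda>k. k \<in> F) x) l = (\<Sum>k\<in>F. x k * t k l)" using F by simp
qed

lemma key_trunc:
  assumes F: "finite F" and y: "y \<in> H2"
  shows "H2_inner (Tm (trunc (\<lambda>k. k \<in> F) c)) y = (\<Sum>k\<in>F. c k * H2_inner (Tm (H2_monom k)) y)"
proof -
  have row: "(\<lambda>l. t k l * cnj (y l)) summable_on UNIV" for k
    using H2_prod_summable[OF Tm_in[OF H2_monom_in] y, of k] by (simp add: Tm_monom)
  have "H2_inner (Tm (trunc (\<lambda>k. k \<in> F) c)) y = (\<Sum>\<^sub>\<infinity>l. \<Sum>k\<in>F. c k * (t k l * cnj (y l)))"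
    unfolding H2_inner_def Tm_trunc[OF F] sum_distrib_right by (simp add: mult_ac)
  also have "\<dots> = (\<Sum>k\<in>F. \<Sum>\<^sub>\<infinity>l. c k * (t k l * cnj (y l)))"
    using infsum_sum_swap[OF F, of "\<lambda>k l. c k * (t k l * cnj (y l))" UNIV] row
    by (simp add: summable_on_cmult_right)
  also have "\<dots> = (\<Sum>k\<in>F. c k * H2_inner (Tm (H2_monom k)) y)"
    by (simp add: infsum_cmult_right' H2_inner_def Tm_monom)
  finally show ?thesis .
qed

lemma Tm_adj:
  assumes y: "y \<in> H2"
  shows "\<exists>z\<in>H2. \<forall>x\<in>H2. H2_inner (Tm x) y = H2_inner x z"
proof -
  define z where "z k = cnj (H2_inner (Tm (H2_monom k)) y)" for k
  have zc: "H2_inner (Tm (H2_monom k)) y = cnj (z k)" for k by (simp add: z_def)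
  have "(\<Sum>k\<in>F. (cmod (z k))\<^sup>2) \<le> (M * H2_norm y)\<^sup>2" if F: "finite F" for F
  proof (rule sq_le_aux)
    let ?S = "\<Sum>k\<in>F. (cmod (z k))\<^sup>2"
    show S0: "?S \<ge> 0" by (simp add: sum_nonneg)
    show "M * H2_norm y \<ge> 0" by (intro mult_nonneg_nonneg M0 H2_norm_nonneg)
    have "H2_inner (Tm (trunc (\<lambda>k. k \<in> F) z)) y = (\<Sum>k\<in>F. z k * cnj (z k))"
      by (simp only: key_trunc[OF F y] zc)
    also have "\<dots> = of_real ?S"
      by (simp add: complex_norm_square[unfolded of_real_power])
    finally have eq: "H2_inner (Tm (trunc (\<lambda>k. k \<in> F) z)) y = of_real ?S" .
    have "cmod (H2_inner (Tm (trunc (\<lambda>k. k \<in> F) z)) y) \<le> M * H2_norm (trunc (\<lambda>k. k \<in> F) z) * H2_norm y"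
      by (rule Tm_bound[OF H2_trunc[OF F] y])
    moreover have C: "cmod (of_real ?S) = ?S"
      by (simp only: norm_of_real abs_of_nonneg[OF S0])
    ultimately show "?S \<le> M * H2_norm y * sqrt ?S"
      unfolding eq C H2_norm_nsq[of "trunc _ _"] nsq_trunc[OF F] by (simp add: mult_ac)
  qed
  then have zH: "z \<in> H2" by (rule conjunct1[OF H2_bound])
  have "H2_inner (Tm x) y = H2_inner x z" if x: "x \<in> H2" for x
  proof -
    have "H2_inner (Tm x) y - H2_inner x z = 0"
    proof (rule zero_by_eps)
      show "M * H2_norm y + H2_norm z \<ge> 0" using M0 by (simp add: H2_norm_nonneg)
      fix e :: real assume e: "e > 0"
      obtain F where F: "finite F" and d: "H2_norm (\<lambda>k. x k - trunc (\<lambda>k. k \<in> F) x k) \<le> e"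
        using tail_small[OF x e] by blast
      define xF where "xF = trunc (\<lambda>k. k \<in> F) x"
      define d where "d = (\<lambda>k. x k - xF k)"
      have xFH: "xF \<in> H2" unfolding xF_def by (rule H2_trunc[OF F])
      have dH: "d \<in> H2" unfolding d_def by (rule H2_diff[OF x xFH])
      have xs: "x = (\<lambda>k. xF k + d k)" by (simp add: d_def)
      have "H2_inner (Tm x) y = H2_inner (Tm xF) y + H2_inner (Tm d) y"
        by (subst xs, subst Tm_add[OF xFH dH]) (rule inner_add_left[OF Tm_in[OF xFH] Tm_in[OF dH] y])
      moreover have "H2_inner x z = H2_inner xF z + H2_inner d z"
        by (subst xs) (rule inner_add_left[OF xFH dH zH])
      moreover have "H2_inner (Tm xF) y = H2_inner xF z"
        unfolding xF_def by (simp only: key_trunc[OF F y] inner_trunc_left[OF F] zc)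
      ultimately have "H2_inner (Tm x) y - H2_inner x z = H2_inner (Tm d) y - H2_inner d z" by simp
      also have "cmod \<dots> \<le> cmod (H2_inner (Tm d) y) + cmod (H2_inner d z)"
        by (rule norm_triangle_ineq4)
      also have "\<dots> \<le> M * H2_norm d * H2_norm y + H2_norm d * H2_norm z"
        by (intro add_mono Tm_bound CS dH y zH)
      also have "\<dots> \<le> M * e * H2_norm y + e * H2_norm z"
        using d M0 unfolding d_def xF_def
        by (intro add_mono mult_right_mono mult_left_mono H2_norm_nonneg) auto
      finally show "cmod (H2_inner (Tm x) y - H2_inner x z) \<le> e * (M * H2_norm y + H2_norm z)"
        by (simp add: algebra_simps)
    qed
    then show ?thesis by simp
  qed
  then show ?thesis using zH by blast
qed

end


lemma nsq_add_Re:
  assumes a: "a \<in> H2" and b: "b \<in> H2"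
  shows "nsq (\<lambda>k. a k + b k) = nsq a + nsq b + 2 * Re (H2_inner a b)"
proof -
  have ab: "(\<lambda>k. a k + b k) \<in> H2" by (rule H2_add[OF a b])
  have "complex_of_real (nsq (\<lambda>k. a k + b k)) = H2_inner (\<lambda>k. a k + b k) (\<lambda>k. a k + b k)"
    by (rule inner_self[OF ab, symmetric])
  also have "\<dots> = H2_inner a a + H2_inner a b + H2_inner b a + H2_inner b b"
    by (simp add: inner_add_left[OF a b ab] inner_add_right[OF a b a] inner_add_right[OF a b b])
  also have "\<dots> = of_real (nsq a) + of_real (nsq b) + (H2_inner a b + cnj (H2_inner a b))"
    by (simp add: inner_self a b inner_cnj_sym[of b a])
  also have "H2_inner a b + cnj (H2_inner a b) = of_real (2 * Re (H2_inner a b))"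
    by (simp add: complex_add_cnj)
  finally have "complex_of_real (nsq (\<lambda>k. a k + b k)) = of_real (nsq a + nsq b + 2 * Re (H2_inner a b))"
    by simp
  then show ?thesis by (simp only: of_real_eq_iff)
qed

context
  fixes C :: "(('d::finite \<Rightarrow> nat) \<Rightarrow> complex) \<Rightarrow> (('d \<Rightarrow> nat) \<Rightarrow> complex)"
  assumes conj: "is_conjugation C"
begin

lemma C_in: "a \<in> H2 \<Longrightarrow> C a \<in> H2"
  using conj by (simp add: is_conjugation_def)
lemma C_add: "a \<in> H2 \<Longrightarrow> b \<in> H2 \<Longrightarrow> C (\<lambda>k. a k + b k) = (\<lambda>k. C a k + C b k)"
  using conj by (simp add: is_conjugation_def)
lemma C_scale: "a \<in> H2 \<Longrightarrow> C (\<lambda>k. c * a k) = (\<lambda>k. cnj c * C a k)"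
  using conj by (simp add: is_conjugation_def)
lemma C_invol: "a \<in> H2 \<Longrightarrow> C (C a) = a"
  using conj by (simp add: is_conjugation_def)
lemma C_norm: "a \<in> H2 \<Longrightarrow> H2_norm (C a) = H2_norm a"
  using conj by (simp add: is_conjugation_def)

lemma C_nsq: "a \<in> H2 \<Longrightarrow> nsq (C a) = nsq a"
  using C_norm[of a] by (simp add: H2_norm_nsq nsq_nonneg)

lemma C_Re: 
  assumes a: "a \<in> H2" and b: "b \<in> H2"
  shows "Re (H2_inner (C a) (C b)) = Re (H2_inner a b)"
proof -
  have "nsq (\<lambda>k. C a k + C b k) = nsq (C a) + nsq (C b) + 2 * Re (H2_inner (C a) (C b))"
    by (rule nsq_add_Re[OF C_in[OF a] C_in[OF b]])
  moreover have "nsq (\<lambda>k. C a k + C b k) = nsq (\<lambda>k. a k + b k)"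
    using C_add[OF a b] C_nsq[OF H2_add[OF a b]] by simp
  moreover have "nsq (\<lambda>k. a k + b k) = nsq a + nsq b + 2 * Re (H2_inner a b)"
    by (rule nsq_add_Re[OF a b])
  ultimately show ?thesis using C_nsq[OF a] C_nsq[OF b] by simp
qed

lemma C_inner:
  assumes a: "a \<in> H2" and b: "b \<in> H2"
  shows "H2_inner (C a) (C b) = H2_inner b a"
proof -
  have ib: "(\<lambda>k. \<i> * b k) \<in> H2" by (rule H2_scale[OF b])
  have r1: "Re (H2_inner (C a) (C b)) = Re (H2_inner a b)" by (rule C_Re[OF a b])
  have "Re (H2_inner (C a) (C (\<lambda>k. \<i> * b k))) = Re (H2_inner a (\<lambda>k. \<i> * b k))" by (rule C_Re[OF a ib])
  moreover have "H2_inner (C a) (C (\<lambda>k. \<i> * b k)) = \<i> * H2_inner (C a) (C b)"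
    by (simp only: C_scale[OF b] inner_scale_right complex_cnj_cnj)
  moreover have "H2_inner a (\<lambda>k. \<i> * b k) = cnj \<i> * H2_inner a b"
    by (rule inner_scale_right)
  ultimately have r2: "Im (H2_inner (C a) (C b)) = - Im (H2_inner a b)"
    by simp
  show ?thesis
    by (simp add: inner_cnj_sym[of b a] complex_eq_iff r1 r2)
qed

lemma C_inner2:
  assumes a: "a \<in> H2" and b: "b \<in> H2"
  shows "H2_inner (C a) b = H2_inner (C b) a"
  using C_inner[OF a C_in[OF b]] C_invol[OF b] by simp

lemma C_inner3:
  assumes a: "a \<in> H2" and b: "b \<in> H2"
  shows "H2_inner a (C b) = H2_inner b (C a)"
  using C_inner[OF C_in[OF a] b] C_invol[OF a] by simp

lemma U_monom: "canon_unitary C (H2_monom k) = C (H2_monom k)"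
proof -
  have "J_H2 (H2_monom k) = H2_monom k" by (auto simp: J_H2_def H2_monom_def)
  then show ?thesis by (simp add: canon_unitary_def)
qed

lemma U_adj:
  assumes w: "w \<in> H2"
  shows "H2_adj (canon_unitary C) w = J_H2 (C w)"
proof (rule adj_eq)
  show "J_H2 (C w) \<in> H2" by (rule H2_J[OF C_in[OF w]])
  show "\<forall>x\<in>H2. H2_inner (canon_unitary C x) w = H2_inner x (J_H2 (C w))"
  proof
    fix x :: "('d \<Rightarrow> nat) \<Rightarrow> complex" assume x: "x \<in> H2"
    have "H2_inner (canon_unitary C x) w = H2_inner (C w) (J_H2 x)"
      unfolding canon_unitary_def by (rule C_inner2[OF H2_J[OF x] w])
    also have "\<dots> = H2_inner x (J_H2 (C w))"
      by (simp add: H2_inner_def J_H2_def mult.commute)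
    finally show "H2_inner (canon_unitary C x) w = H2_inner x (J_H2 (C w))" .
  qed
qed

end

locale toepC = toep t M for t :: "('d::finite \<Rightarrow> nat) \<Rightarrow> ('d \<Rightarrow> nat) \<Rightarrow> complex" and M +
  fixes C :: "(('d \<Rightarrow> nat) \<Rightarrow> complex) \<Rightarrow> (('d \<Rightarrow> nat) \<Rightarrow> complex)"
  assumes conj: "is_conjugation C"
begin

lemma adjT: "y \<in> H2 \<Longrightarrow> H2_adj Tm y \<in> H2 \<and> (\<forall>x\<in>H2. H2_inner (Tm x) y = H2_inner x (H2_adj Tm y))"
  by (rule adj_exists[OF Tm_adj])

lemma t_inner: "t l k = H2_inner (Tm (H2_monom l)) (H2_monom k)"
  by (simp add: Tm_monom inner_monom_right)

lemma main:
  "(C_symmetric C Tm \<longleftrightarrow> (\<forall>k l. t l k = H2_inner (Tm (C (H2_monom k))) (C (H2_monom l))))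
   \<and> (C_symmetric C Tm \<longleftrightarrow> (\<forall>k l. t l k =
        H2_inner (H2_adj (canon_unitary C) (Tm (canon_unitary C (H2_monom k)))) (H2_monom l)))"
proof -
  note e = H2_monom_in
  have Ce: "C (H2_monom k) \<in> H2" for k by (rule C_in[OF conj e])
  have eq23: "H2_inner (H2_adj (canon_unitary C) (Tm (canon_unitary C (H2_monom k)))) (H2_monom l)
      = H2_inner (Tm (C (H2_monom k))) (C (H2_monom l))" for k l
  proof -
    have w: "Tm (C (H2_monom k)) \<in> H2" by (rule Tm_in[OF Ce])
    have "H2_inner (H2_adj (canon_unitary C) (Tm (canon_unitary C (H2_monom k)))) (H2_monom l)
        = cnj (C (Tm (C (H2_monom k))) l)"
      by (simp add: U_monom[OF conj] U_adj[OF conj w] inner_monom_right J_H2_def)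
    also have "C (Tm (C (H2_monom k))) l = H2_inner (C (Tm (C (H2_monom k)))) (H2_monom l)"
      by (simp add: inner_monom_right)
    also have "\<dots> = H2_inner (C (H2_monom l)) (Tm (C (H2_monom k)))"
      by (rule C_inner2[OF conj w e])
    finally show ?thesis by (simp add: inner_cnj_sym[of "Tm (C (H2_monom k))"])
  qed
  have eq12: "C_symmetric C Tm \<longleftrightarrow> (\<forall>k l. t l k = H2_inner (Tm (C (H2_monom k))) (C (H2_monom l)))"
  proof
    assume cs: "C_symmetric C Tm"
    show "\<forall>k l. t l k = H2_inner (Tm (C (H2_monom k))) (C (H2_monom l))"
    proof (intro allI)
      fix k l
      define z where "z = H2_adj Tm (C (H2_monom l))"
      have z: "z \<in> H2" "\<forall>x\<in>H2. H2_inner (Tm x) (C (H2_monom l)) = H2_inner x z"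
        using adjT[OF Ce] unfolding z_def by auto
      have Cz: "C z = Tm (H2_monom l)"
        using cs e unfolding C_symmetric_def z_def by blast
      have "t l k = H2_inner (C z) (H2_monom k)" by (simp add: Cz t_inner)
      also have "\<dots> = H2_inner (C (H2_monom k)) z" by (rule C_inner2[OF conj z(1) e])
      also have "\<dots> = H2_inner (Tm (C (H2_monom k))) (C (H2_monom l))" using z(2) Ce by metis
      finally show "t l k = H2_inner (Tm (C (H2_monom k))) (C (H2_monom l))" .
    qed
  next
    assume S2: "\<forall>k l. t l k = H2_inner (Tm (C (H2_monom k))) (C (H2_monom l))"
    have B': "H2_adj Tm (H2_monom k) = C (Tm (C (H2_monom k)))" for k
    proof
      fix j
      have A: "H2_adj Tm (H2_monom k) \<in> H2 \<and> (\<forall>x\<in>H2. H2_inner (Tm x) (H2_monom k) = H2_inner x (H2_adj Tm (H2_monom k)))"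
        by (rule adjT[OF e])
      have w: "Tm (C (H2_monom k)) \<in> H2" by (rule Tm_in[OF Ce])
      have "H2_inner (H2_monom j) (H2_adj Tm (H2_monom k)) = H2_inner (Tm (H2_monom j)) (H2_monom k)"
        using A e by metis
      also have "\<dots> = t j k" by (simp add: t_inner)
      also have "\<dots> = H2_inner (Tm (C (H2_monom k))) (C (H2_monom j))" using S2 by simp
      also have "\<dots> = H2_inner (H2_monom j) (C (Tm (C (H2_monom k))))"
        by (rule C_inner3[OF conj w e])
      finally show "H2_adj Tm (H2_monom k) j = C (Tm (C (H2_monom k))) j"
        by (simp add: inner_monom_left)
    qed
    show "C_symmetric C Tm"
      unfolding C_symmetric_def
    proof
      fix a :: "('d \<Rightarrow> nat) \<Rightarrow> complex" assume a: "a \<in> H2"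
      have Ca: "C a \<in> H2" by (rule C_in[OF conj a])
      define w1 where "w1 = H2_adj Tm (C a)"
      have w1: "w1 \<in> H2" "\<forall>x\<in>H2. H2_inner (Tm x) (C a) = H2_inner x w1"
        using adjT[OF Ca] unfolding w1_def by auto
      have Ta: "Tm a \<in> H2" by (rule Tm_in[OF a])
      have "C w1 k = C (C (Tm a)) k" for k
      proof -
        have w: "Tm (C (H2_monom k)) \<in> H2" by (rule Tm_in[OF Ce])
        have A: "H2_adj Tm (H2_monom k) \<in> H2 \<and> (\<forall>x\<in>H2. H2_inner (Tm x) (H2_monom k) = H2_inner x (H2_adj Tm (H2_monom k)))"
          by (rule adjT[OF e])
        have "C w1 k = H2_inner (C w1) (H2_monom k)" by (simp add: inner_monom_right)
        also have "\<dots> = H2_inner (C (H2_monom k)) w1" by (rule C_inner2[OF conj w1(1) e])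
        also have "\<dots> = H2_inner (Tm (C (H2_monom k))) (C a)" using w1(2) Ce by metis
        also have "\<dots> = H2_inner a (C (Tm (C (H2_monom k))))" by (rule C_inner3[OF conj w a])
        also have "\<dots> = H2_inner a (H2_adj Tm (H2_monom k))" by (simp add: B')
        also have "\<dots> = H2_inner (Tm a) (H2_monom k)" using A a by metis
        also have "\<dots> = H2_inner (C (H2_monom k)) (C (Tm a))" by (rule C_inner[OF conj e Ta, symmetric])
        also have "\<dots> = H2_inner (C (C (Tm a))) (H2_monom k)" by (rule C_inner2[OF conj C_in[OF conj Ta] e, symmetric])
        also have "\<dots> = C (C (Tm a)) k" by (simp add: inner_monom_right)
        finally show ?thesis .
      qed
      then have "C w1 = C (C (Tm a))" by auto
      then show "C (H2_adj Tm (C a)) = Tm a" using C_invol[OF conj Ta] unfolding w1_def by simp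
    qed
  qed
  show ?thesis using eq12 eq23 by simp
qed

end


theorem theorem7p5:
  fixes \<phi> :: "real^'d::finite \<Rightarrow> complex"
    and C :: "(('d \<Rightarrow> nat) \<Rightarrow> complex) \<Rightarrow> (('d \<Rightarrow> nat) \<Rightarrow> complex)"
  assumes "CARD('d) \<ge> 2"
    and "Linfty_T \<phi>"
    and "is_conjugation C"
  shows "(C_symmetric C (toeplitz \<phi>)
          \<longleftrightarrow> (\<forall>k l. fourier_coeff \<phi> (\<lambda>i. int (k i) - int (l i)) =
                H2_inner (toeplitz \<phi> (C (H2_monom k))) (C (H2_monom l))))
       \<and> (C_symmetric C (toeplitz \<phi>)
          \<longleftrightarrow> (\<forall>k l. fourier_coeff \<phi> (\<lambda>i. int (k i) - int (l i)) =
                H2_inner (H2_adj (canon_unitary C) (toeplitz \<phi> (canon_unitary C (H2_monom k))))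
                         (H2_monom l)))"
proof -
  obtain M where M0: "M \<ge> 0" and TB: "\<And>F G a b. finite F \<Longrightarrow> finite G \<Longrightarrow>
       cmod (\<Sum>k\<in>F. \<Sum>l\<in>G. a k * cnj (b l) * tm \<phi> k l) \<le> M * sqrt (\<Sum>k\<in>F. (cmod (a k))\<^sup>2) * sqrt (\<Sum>l\<in>G. (cmod (b l))\<^sup>2)"
    using bound_strong[OF assms(2)] by blast
  interpret toepC "tm \<phi>" M C
    by unfold_locales (use M0 TB assms(3) in auto)
  have T: "toeplitz \<phi> = Tm"
    by (rule ext) (simp add: toeplitz_def Tm_def tm_def)
  show ?thesis using main unfolding T fourier_tm .
qed

end
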